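(* Let $d\ge2$, $R>0$. For every Borel measure $\nu$ on $\mathcal{S}^-_R\times\mathcal{S}^+_R$ whose marginals on $\mathcal{S}^-_R$ and $\mathcal{S}^+_R$ are $\mu_-$ and $\mu_+$ respectively, $$\int_{\mathcal{S}^-_R\times\mathcal{S}^+_R}|\eta-\eta^+|\,d\nu(\eta,\eta^+)\ \ge\ s_{d-1}\,b_d\,R^d,$$ and equality is attained by the measure concentrated on pairs $(\eta,\eta^+)$ with $(\eta_1,\dots,\eta_{d-1})=(\eta^+_1,\dots,\eta^+_{d-1})$ (vertical transport).
   Context: Let $S^{d-1}_R=\{x\in\mathbb{R}^d:|x|=R\}$ and $\mathcal{S}^\pm_R=\{\eta\in S^{d-1}_R:\pm\eta_d\ge0\}$ the upper/lower hemispheres. Let $\mu_\pm=s_{d-1}\,d\eta'$ on $\mathcal{S}^\pm_R$, where $d\eta'$ assigns to a Borel set the $(d-1)$-dimensional Lebesgue measure of its orthogonal projection onto $\{\eta_d=0\}$. $s_{d-1}=2\pi^{d/2}/\Gamma(d/2)$ is the area of the unit sphere $S^{d-1}$ and $b_d=2\pi^{d/2}/(d\Gamma(d/2))$ is the volume of the unit ball in $\mathbb{R}^d$. *)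

theory Defs
  imports "HOL-Analysis.Analysis"
begin

text \<open>Points of R^d are represented as pairs (x', x_d) with x' in R^(d-1) = real^'m
  and x_d the last coordinate; d = CARD('m) + 1, so d \<ge> 2 automatically.\<close>

type_synonym 'm pt = "(real^'m) \<times> real"

definition sphere_area :: "nat \<Rightarrow> real" where
  "sphere_area d = 2 * pi powr (real d / 2) / Gamma (real d / 2)"

definition ball_vol :: "nat \<Rightarrow> real" where
  "ball_vol d = 2 * pi powr (real d / 2) / (real d * Gamma (real d / 2))"

definition upper_hemi :: "real \<Rightarrow> ('m::finite) pt set" where
  "upper_hemi R = {\<eta>. norm \<eta> = R \<and> snd \<eta> \<ge> 0}"

definition lower_hemi :: "real \<Rightarrow> ('m::finite) pt set" where
  "lower_hemi R = {\<eta>. norm \<eta> = R \<and> snd \<eta> \<le> 0}"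

text \<open>mu_pm = s_{d-1} d\<eta>' : the measure of a Borel set A of the hemisphere is s_{d-1} times
  the (d-1)-dimensional Lebesgue measure of its projection onto {\<eta>_d = 0}.  Since the
  projection restricted to a closed hemisphere is a bijection onto the closed ball of
  radius R, with inverse the graph map, this is the push-forward of Lebesgue measure on
  the ball under the graph map, scaled by s_{d-1}.\<close>

definition mu_plus :: "real \<Rightarrow> ('m::finite) pt measure" where
  "mu_plus R = scale_measure (ennreal (sphere_area (CARD('m) + 1)))
     (distr (restrict_space lborel (cball (0::real^'m) R))
            (restrict_space borel (upper_hemi R))
            (\<lambda>x. (x, sqrt (R\<^sup>2 - (norm x)\<^sup>2))))"

definition mu_minus :: "real \<Rightarrow> ('m::finite) pt measure" where
  "mu_minus R = scale_measure (ennreal (sphere_area (CARD('m) + 1)))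
     (distr (restrict_space lborel (cball (0::real^'m) R))
            (restrict_space borel (lower_hemi R))
            (\<lambda>x. (x, - sqrt (R\<^sup>2 - (norm x)\<^sup>2))))"

definition admissible_plan :: "real \<Rightarrow> (('m::finite) pt \<times> 'm pt) measure \<Rightarrow> bool" where
  "admissible_plan R \<nu> \<longleftrightarrow>
     sets \<nu> = sets (restrict_space borel (lower_hemi R \<times> upper_hemi R)) \<and>
     space \<nu> = lower_hemi R \<times> upper_hemi R \<and>
     distr \<nu> (restrict_space borel (lower_hemi R)) fst = mu_minus R \<and>
     distr \<nu> (restrict_space borel (upper_hemi R)) snd = mu_plus R"

end

theory Submission
  imports Defs
begin


lemma ball_vol_eq: "n > 0 \<Longrightarrow> ball_vol n = unit_ball_vol (real n)"
proof -
  assume "n > 0" then have False: "n \<noteq> 0" by simp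
  have G: "Gamma (real n / 2 + 1) = (real n / 2) * Gamma (real n / 2)"
    using Gamma_plus1[of "real n / 2"] False nonpos_Ints_nonpos[of "real n / 2"] by force
  have P: "Gamma (real n / 2) > 0" using False by (intro Gamma_real_pos) simp
  show ?thesis using P False
    unfolding ball_vol_def unit_ball_vol_def G by (simp add: field_simps)
qed

lemma key:
  fixes R :: real assumes R: "R \<ge> 0"
  shows "(\<integral>\<^sup>+x. indicator (cball (0::real^'m::finite) R) x * ennreal (2 * sqrt (R\<^sup>2 - (norm x)\<^sup>2)) \<partial>lborel)
     = ennreal (ball_vol (CARD('m)+1) * R^(CARD('m)+1))"
proof -
  have "emeasure (lborel :: 'm pt measure) (cball 0 R) = ennreal (unit_ball_vol (DIM('m pt)) * R^DIM('m pt))"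
    using R by (rule emeasure_cball)
  also have "\<dots> = ennreal (ball_vol (CARD('m)+1) * R^(CARD('m)+1))"
    by (simp add: ball_vol_eq)
  finally have 1: "emeasure (lborel :: 'm pt measure) (cball 0 R) = ennreal (ball_vol (CARD('m)+1) * R^(CARD('m)+1))" .
  have "emeasure (lborel :: 'm pt measure) (cball 0 R) = emeasure (lborel \<Otimes>\<^sub>M lborel) (cball (0::'m pt) R)"
    by (simp add: lborel_prod)
  also have "\<dots> = (\<integral>\<^sup>+x. emeasure lborel (Pair x -` cball (0::'m pt) R) \<partial>lborel)"
    by (rule lborel.emeasure_pair_measure_alt) (simp only: lborel_prod sets_lborel, rule borel_closed, rule closed_cball)
  also have "\<dots> = (\<integral>\<^sup>+x. indicator (cball (0::real^'m::finite) R) x * ennreal (2 * sqrt (R\<^sup>2 - (norm x)\<^sup>2)) \<partial>lborel)"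
  proof (rule nn_integral_cong)
    fix x :: "real^'m"
    show "emeasure lborel (Pair x -` cball (0::'m pt) R) = indicator (cball 0 R) x * ennreal (2 * sqrt (R\<^sup>2 - (norm x)\<^sup>2))"
    proof (cases "norm x \<le> R")
      case True
      have "Pair x -` cball (0::'m pt) R = {- sqrt (R\<^sup>2 - (norm x)\<^sup>2) .. sqrt (R\<^sup>2 - (norm x)\<^sup>2)}"
      proof -
        have "(norm x)\<^sup>2 \<le> R\<^sup>2" using True by (simp add: power_mono)
        moreover have "\<And>y::real. (sqrt ((norm x)\<^sup>2 + y\<^sup>2) \<le> R) = (y\<^sup>2 \<le> R\<^sup>2 - (norm x)\<^sup>2)"
          using R by (smt (verit) real_sqrt_le_iff real_sqrt_abs sqrt_le_D real_sqrt_le_mono power2_eq_square zero_le_square)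
        moreover have "\<And>y::real. (y\<^sup>2 \<le> R\<^sup>2 - (norm x)\<^sup>2) = (\<bar>y\<bar> \<le> sqrt (R\<^sup>2 - (norm x)\<^sup>2))"
          by (metis real_sqrt_abs real_sqrt_le_iff)
        ultimately show ?thesis
          by (auto simp: norm_Pair dist_norm abs_le_iff)
      qed
      moreover have "(norm x)\<^sup>2 \<le> R\<^sup>2" using True by (simp add: power_mono)
      moreover have "- sqrt (R\<^sup>2 - (norm x)\<^sup>2) \<le> sqrt (R\<^sup>2 - (norm x)\<^sup>2)" using calculation(2) by simp
      ultimately show ?thesis using True by (simp add: dist_norm emeasure_lborel_Icc)
    next
      case False
      have "Pair x -` cball (0::'m pt) R = {}"
        using False by (auto simp: norm_Pair dist_norm dest: order.trans[OF real_sqrt_sum_squares_ge1])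
      then show ?thesis using False by (simp add: dist_norm)
    qed
  qed
  finally show ?thesis using 1 by simp
qed


lemma cball_borel[measurable]: "cball (x::'a::euclidean_space) r \<in> sets borel"
  by (rule borel_closed) simp

lemma snd_borel[measurable]: "(\<lambda>x. snd x :: 'b::topological_space) \<in> borel_measurable (borel :: ('a::topological_space \<times> 'b) measure)"
  by (rule borel_measurable_continuous_onI) (intro continuous_intros)

lemma fst_borel[measurable]: "(\<lambda>x. fst x :: 'a::topological_space) \<in> borel_measurable (borel :: ('a \<times> 'b::topological_space) measure)"
  by (rule borel_measurable_continuous_onI) (intro continuous_intros)

lemma ennreal_double: "ennreal a + ennreal a = ennreal (2 * a)"
proof (cases "a \<ge> 0")
  case True then show ?thesis by (simp add: ennreal_plus[symmetric] del: ennreal_plus)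
next
  case False then show ?thesis by (simp add: ennreal_neg)
qed

lemma norm_snd_le': "norm (snd z) \<le> norm (z :: 'a::real_normed_vector \<times> 'b::real_normed_vector)"
  by (cases z) (simp add: norm_snd_le)

lemma key2:
  fixes R :: real assumes R: "R \<ge> 0"
  shows "(\<integral>\<^sup>+x. indicator (cball (0::real^'m::finite) R) x * ennreal (sqrt (R\<^sup>2 - (norm x)\<^sup>2)) \<partial>lborel)
       + (\<integral>\<^sup>+x. indicator (cball (0::real^'m::finite) R) x * ennreal (sqrt (R\<^sup>2 - (norm x)\<^sup>2)) \<partial>lborel)
     = ennreal (ball_vol (CARD('m)+1) * R^(CARD('m)+1))"
proof -
  have "(\<integral>\<^sup>+x. indicator (cball (0::real^'m::finite) R) x * ennreal (sqrt (R\<^sup>2 - (norm x)\<^sup>2)) \<partial>lborel)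
       + (\<integral>\<^sup>+x. indicator (cball (0::real^'m::finite) R) x * ennreal (sqrt (R\<^sup>2 - (norm x)\<^sup>2)) \<partial>lborel)
     = (\<integral>\<^sup>+x. indicator (cball (0::real^'m::finite) R) x * ennreal (sqrt (R\<^sup>2 - (norm x)\<^sup>2))
          + indicator (cball (0::real^'m::finite) R) x * ennreal (sqrt (R\<^sup>2 - (norm x)\<^sup>2)) \<partial>lborel)"
    by (rule nn_integral_add[symmetric]) auto
  also have "\<dots> = (\<integral>\<^sup>+x. indicator (cball (0::real^'m::finite) R) x * ennreal (2 * sqrt (R\<^sup>2 - (norm x)\<^sup>2)) \<partial>lborel)"
    by (rule nn_integral_cong) (simp add: indicator_def ennreal_double)
  also have "\<dots> = ennreal (ball_vol (CARD('m)+1) * R^(CARD('m)+1))" using R by (rule key)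
  finally show ?thesis .
qed

lemma Tplus_meas:
  "(\<lambda>x. (x, sqrt (R\<^sup>2 - (norm x)\<^sup>2))) \<in> measurable (restrict_space lborel (cball (0::real^'m::finite) R)) (restrict_space borel (upper_hemi R))"
proof (rule measurable_restrict_space2)
  show "(\<lambda>x. (x, sqrt (R\<^sup>2 - (norm x)\<^sup>2))) \<in> space (restrict_space lborel (cball (0::real^'m::finite) R)) \<rightarrow> upper_hemi R"
  proof
    fix x :: "real^'m" assume "x \<in> space (restrict_space lborel (cball 0 R))"
    then have x: "norm x \<le> R" by (simp add: space_restrict_space)
    then have "(norm x)\<^sup>2 \<le> R\<^sup>2" by (simp add: power_mono)
    moreover have "R \<ge> 0" using x norm_ge_zero order.trans by blast
    ultimately show "(x, sqrt (R\<^sup>2 - (norm x)\<^sup>2)) \<in> upper_hemi R"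
      by (simp add: upper_hemi_def norm_Pair)
  qed
  show "(\<lambda>x. (x, sqrt (R\<^sup>2 - (norm x)\<^sup>2))) \<in> measurable (restrict_space lborel (cball (0::real^'m::finite) R)) borel"
    by (rule measurable_restrict_space1) measurable
qed

lemma Tminus_meas:
  "(\<lambda>x. (x, - sqrt (R\<^sup>2 - (norm x)\<^sup>2))) \<in> measurable (restrict_space lborel (cball (0::real^'m::finite) R)) (restrict_space borel (lower_hemi R))"
proof (rule measurable_restrict_space2)
  show "(\<lambda>x. (x, - sqrt (R\<^sup>2 - (norm x)\<^sup>2))) \<in> space (restrict_space lborel (cball (0::real^'m::finite) R)) \<rightarrow> lower_hemi R"
  proof
    fix x :: "real^'m" assume "x \<in> space (restrict_space lborel (cball 0 R))"
    then have x: "norm x \<le> R" by (simp add: space_restrict_space)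
    then have "(norm x)\<^sup>2 \<le> R\<^sup>2" by (simp add: power_mono)
    moreover have "R \<ge> 0" using x norm_ge_zero order.trans by blast
    ultimately show "(x, - sqrt (R\<^sup>2 - (norm x)\<^sup>2)) \<in> lower_hemi R"
      by (simp add: lower_hemi_def norm_Pair)
  qed
  show "(\<lambda>x. (x, - sqrt (R\<^sup>2 - (norm x)\<^sup>2))) \<in> measurable (restrict_space lborel (cball (0::real^'m::finite) R)) borel"
    by (rule measurable_restrict_space1) measurable
qed

lemma int_plus:
  "(\<integral>\<^sup>+\<eta>. ennreal (snd \<eta>) \<partial>(mu_plus R :: ('m::finite) pt measure)) = ennreal (sphere_area (CARD('m) + 1)) *
    (\<integral>\<^sup>+x. indicator (cball (0::real^'m) R) x * ennreal (sqrt (R\<^sup>2 - (norm x)\<^sup>2)) \<partial>lborel)"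
proof -
  have m: "(\<lambda>\<eta>::'m pt. ennreal (snd \<eta>)) \<in> borel_measurable (restrict_space borel (upper_hemi R))"
    by (rule measurable_restrict_space1) measurable
  show ?thesis
    unfolding mu_plus_def
    apply (subst nn_integral_scale_measure)
     apply (simp add: m)
    apply (subst nn_integral_distr[OF Tplus_meas])
     apply (simp add: m)
    apply (subst nn_integral_restrict_space)
     apply simp
    apply (simp add: mult.commute)
    done
qed

lemma int_minus:
  "(\<integral>\<^sup>+\<eta>. ennreal (- snd \<eta>) \<partial>(mu_minus R :: ('m::finite) pt measure)) = ennreal (sphere_area (CARD('m) + 1)) *
    (\<integral>\<^sup>+x. indicator (cball (0::real^'m) R) x * ennreal (sqrt (R\<^sup>2 - (norm x)\<^sup>2)) \<partial>lborel)"
proof -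
  have m: "(\<lambda>\<eta>::'m pt. ennreal (- snd \<eta>)) \<in> borel_measurable (restrict_space borel (lower_hemi R))"
    by (rule measurable_restrict_space1) measurable
  show ?thesis
    unfolding mu_minus_def
    apply (subst nn_integral_scale_measure)
     apply (simp add: m)
    apply (subst nn_integral_distr[OF Tminus_meas])
     apply (simp add: m)
    apply (subst nn_integral_restrict_space)
     apply simp
    apply (simp add: mult.commute)
    done
qed

lemma sphere_area_pos: "sphere_area (Suc n) > 0"
  unfolding sphere_area_def by (intro divide_pos_pos mult_pos_pos Gamma_real_pos) auto


lemma distr_scale:
  assumes f: "f \<in> measurable M N"
  shows "distr (scale_measure r M) N f = scale_measure r (distr M N f)"
proof (rule measure_eqI)
  show "sets (distr (scale_measure r M) N f) = sets (scale_measure r (distr M N f))" by simp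
  fix A assume A: "A \<in> sets (distr (scale_measure r M) N f)"
  have f': "f \<in> measurable (scale_measure r M) N"
    using f by (simp add: measurable_def space_scale_measure)
  show "emeasure (distr (scale_measure r M) N f) A = emeasure (scale_measure r (distr M N f)) A"
    using A by (simp add: emeasure_distr[OF f'] emeasure_distr[OF f] space_scale_measure)
qed

lemma AE_scale:
  assumes "AE x in M. P x" shows "AE x in scale_measure r M. P x"
proof -
  from assms obtain N where N: "{x\<in>space M. \<not> P x} \<subseteq> N" "emeasure M N = 0" "N \<in> sets M" by (rule AE_E)
  have "N \<in> null_sets (scale_measure r M)" using N(2,3) by (simp add: null_sets_def)
  then show ?thesis using N by (intro AE_I[where N=N]) (simp_all add: space_scale_measure)
qed

lemma lower_bound:
  fixes R :: real and \<nu> :: "('m::finite pt \<times> 'm pt) measure"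
  assumes adm: "admissible_plan R \<nu>"
  shows "(\<integral>\<^sup>+ p. ennreal (snd (snd p)) \<partial>\<nu>) + (\<integral>\<^sup>+ p. ennreal (- snd (fst p)) \<partial>\<nu>)
      \<le> (\<integral>\<^sup>+ p. ennreal (norm (fst p - snd p)) \<partial>\<nu>)"
    and "(\<integral>\<^sup>+ p. ennreal (snd (snd p)) \<partial>\<nu>) = (\<integral>\<^sup>+\<eta>. ennreal (snd \<eta>) \<partial>(mu_plus R :: 'm pt measure))"
    and "(\<integral>\<^sup>+ p. ennreal (- snd (fst p)) \<partial>\<nu>) = (\<integral>\<^sup>+\<eta>. ennreal (- snd \<eta>) \<partial>(mu_minus R :: 'm pt measure))"
proof -
  have sets: "sets \<nu> = sets (restrict_space borel (lower_hemi R \<times> upper_hemi R))"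
    and sp: "space \<nu> = lower_hemi R \<times> upper_hemi R"
    and dm: "distr \<nu> (restrict_space borel (lower_hemi R)) fst = mu_minus R"
    and dp: "distr \<nu> (restrict_space borel (upper_hemi R)) snd = mu_plus R"
    using adm unfolding admissible_plan_def by blast+
  have snd_m0: "snd \<in> measurable (restrict_space borel (lower_hemi R \<times> upper_hemi R)) (borel :: 'm pt measure)"
    by (rule measurable_restrict_space1) (rule snd_borel)
  have fst_m0: "fst \<in> measurable (restrict_space borel (lower_hemi R \<times> upper_hemi R)) (borel :: 'm pt measure)"
    by (rule measurable_restrict_space1) (rule fst_borel)
  have snd_m: "snd \<in> measurable \<nu> (restrict_space borel (upper_hemi R))"
  proof (rule measurable_restrict_space2)
    show "snd \<in> space \<nu> \<rightarrow> upper_hemi R"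
    proof
      fix p assume "p \<in> space \<nu>"
      then have "p \<in> lower_hemi R \<times> upper_hemi R" by (simp only: sp)
      then show "snd p \<in> upper_hemi R" by (simp add: mem_Times_iff)
    qed
    show "snd \<in> measurable \<nu> borel" by (subst measurable_cong_sets[OF sets refl]) (rule snd_m0)
  qed
  have fst_m: "fst \<in> measurable \<nu> (restrict_space borel (lower_hemi R))"
  proof (rule measurable_restrict_space2)
    show "fst \<in> space \<nu> \<rightarrow> lower_hemi R"
    proof
      fix p assume "p \<in> space \<nu>"
      then have "p \<in> lower_hemi R \<times> upper_hemi R" by (simp only: sp)
      then show "fst p \<in> lower_hemi R" by (simp add: mem_Times_iff)
    qed
    show "fst \<in> measurable \<nu> borel" by (subst measurable_cong_sets[OF sets refl]) (rule fst_m0)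
  qed
  have mp: "(\<lambda>\<eta>::'m pt. ennreal (snd \<eta>)) \<in> borel_measurable (restrict_space borel (upper_hemi R))"
    by (rule measurable_restrict_space1) measurable
  have mm: "(\<lambda>\<eta>::'m pt. ennreal (- snd \<eta>)) \<in> borel_measurable (restrict_space borel (lower_hemi R))"
    by (rule measurable_restrict_space1) measurable
  have A: "(\<lambda>p. ennreal (snd (snd p))) \<in> borel_measurable \<nu>"
    using measurable_comp[OF snd_m mp] by (simp add: comp_def)
  have B: "(\<lambda>p. ennreal (- snd (fst p))) \<in> borel_measurable \<nu>"
    using measurable_comp[OF fst_m mm] by (simp add: comp_def)
  show "(\<integral>\<^sup>+ p. ennreal (snd (snd p)) \<partial>\<nu>) = (\<integral>\<^sup>+\<eta>. ennreal (snd \<eta>) \<partial>(mu_plus R :: 'm pt measure))"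
    unfolding dp[symmetric] by (rule nn_integral_distr[symmetric, OF snd_m]) (simp add: mp)
  show "(\<integral>\<^sup>+ p. ennreal (- snd (fst p)) \<partial>\<nu>) = (\<integral>\<^sup>+\<eta>. ennreal (- snd \<eta>) \<partial>(mu_minus R :: 'm pt measure))"
    unfolding dm[symmetric] by (rule nn_integral_distr[symmetric, OF fst_m]) (simp add: mm)
  have "(\<integral>\<^sup>+ p. ennreal (snd (snd p)) \<partial>\<nu>) + (\<integral>\<^sup>+ p. ennreal (- snd (fst p)) \<partial>\<nu>)
       = (\<integral>\<^sup>+ p. ennreal (snd (snd p)) + ennreal (- snd (fst p)) \<partial>\<nu>)"
    by (rule nn_integral_add[symmetric]) (simp_all add: A B)
  also have "\<dots> \<le> (\<integral>\<^sup>+ p. ennreal (norm (fst p - snd p)) \<partial>\<nu>)"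
  proof (rule nn_integral_mono)
    fix p assume "p \<in> space \<nu>"
    then have "p \<in> lower_hemi R \<times> upper_hemi R" by (simp only: sp)
    then have "fst p \<in> lower_hemi R" "snd p \<in> upper_hemi R" by (simp_all add: mem_Times_iff)
    then have p: "snd (fst p) \<le> 0" "snd (snd p) \<ge> 0"
      by (simp_all add: lower_hemi_def upper_hemi_def)
    have "snd (snd p) + - snd (fst p) \<le> norm (snd (fst p - snd p))" using p by simp
    also have "\<dots> \<le> norm (fst p - snd p)"
      by (rule norm_snd_le')
    finally show "ennreal (snd (snd p)) + ennreal (- snd (fst p)) \<le> ennreal (norm (fst p - snd p))"
      using p by (simp add: ennreal_plus[symmetric] del: ennreal_plus)
  qed
  finally show "(\<integral>\<^sup>+ p. ennreal (snd (snd p)) \<partial>\<nu>) + (\<integral>\<^sup>+ p. ennreal (- snd (fst p)) \<partial>\<nu>)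
      \<le> (\<integral>\<^sup>+ p. ennreal (norm (fst p - snd p)) \<partial>\<nu>)" .
qed

theorem mainTheorem7:
  fixes R :: real
  assumes "R > 0"
  shows "(\<forall>\<nu> :: ('m::finite pt \<times> 'm pt) measure. admissible_plan R \<nu> \<longrightarrow>
            (\<integral>\<^sup>+ p. ennreal (norm (fst p - snd p)) \<partial>\<nu>)
              \<ge> ennreal (sphere_area (CARD('m) + 1) * ball_vol (CARD('m) + 1) * R ^ (CARD('m) + 1)))
       \<and> (\<exists>\<nu> :: ('m pt \<times> 'm pt) measure. admissible_plan R \<nu> \<and>
            (AE p in \<nu>. fst (fst p) = fst (snd p)) \<and>
            (\<integral>\<^sup>+ p. ennreal (norm (fst p - snd p)) \<partial>\<nu>)
              = ennreal (sphere_area (CARD('m) + 1) * ball_vol (CARD('m) + 1) * R ^ (CARD('m) + 1)))"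
proof -
  define s where "s = sphere_area (CARD('m) + 1)"
  define I where "I = (\<integral>\<^sup>+x. indicator (cball (0::real^'m) R) x * ennreal (sqrt (R\<^sup>2 - (norm x)\<^sup>2)) \<partial>lborel)"
  have s0: "s > 0" unfolding s_def using sphere_area_pos by simp
  have bv: "ball_vol (CARD('m) + 1) \<ge> 0"
    by (simp add: ball_vol_def Gamma_real_pos less_imp_le)
  have C: "ennreal s * I + ennreal s * I = ennreal (s * ball_vol (CARD('m) + 1) * R ^ (CARD('m) + 1))"
  proof -
    have "ennreal s * I + ennreal s * I = ennreal s * (I + I)" by (simp add: distrib_left)
    also have "\<dots> = ennreal s * ennreal (ball_vol (CARD('m)+1) * R^(CARD('m)+1))"
      unfolding I_def using key2[where R=R and 'm='m] assms by simp
    also have "\<dots> = ennreal (s * ball_vol (CARD('m) + 1) * R ^ (CARD('m) + 1))"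
      using s0 by (simp add: ennreal_mult' mult.assoc)
    finally show ?thesis .
  qed
  have part1: "\<forall>\<nu> :: ('m::finite pt \<times> 'm pt) measure. admissible_plan R \<nu> \<longrightarrow>
            (\<integral>\<^sup>+ p. ennreal (norm (fst p - snd p)) \<partial>\<nu>)
              \<ge> ennreal (sphere_area (CARD('m) + 1) * ball_vol (CARD('m) + 1) * R ^ (CARD('m) + 1))"
  proof (intro allI impI)
    fix \<nu> :: "('m::finite pt \<times> 'm pt) measure" assume adm: "admissible_plan R \<nu>"
    note lb = lower_bound[OF adm]
    show "(\<integral>\<^sup>+ p. ennreal (norm (fst p - snd p)) \<partial>\<nu>)
              \<ge> ennreal (sphere_area (CARD('m) + 1) * ball_vol (CARD('m) + 1) * R ^ (CARD('m) + 1))"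
      using lb(1) C unfolding lb(2,3) int_plus int_minus s_def[symmetric] I_def[symmetric] by simp
  qed
  define G where "G = (\<lambda>x::real^'m. ((x, - sqrt (R\<^sup>2 - (norm x)\<^sup>2)), (x, sqrt (R\<^sup>2 - (norm x)\<^sup>2))))"
  define M where "M = restrict_space lborel (cball (0::real^'m) R)"
  define N where "N = (restrict_space borel (lower_hemi R \<times> upper_hemi R) :: ('m pt \<times> 'm pt) measure)"
  define \<nu> where "\<nu> = scale_measure (ennreal s) (distr M N G)"
  have G_meas: "G \<in> measurable M N"
    unfolding M_def N_def
  proof (rule measurable_restrict_space2)
    show "G \<in> space (restrict_space lborel (cball 0 R)) \<rightarrow> lower_hemi R \<times> upper_hemi R"
      using measurable_space[OF Tplus_meas] measurable_space[OF Tminus_meas]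
      by (auto simp: G_def space_restrict_space)
    show "G \<in> borel_measurable (restrict_space lborel (cball 0 R))"
      unfolding G_def by (rule measurable_restrict_space1) measurable
  qed
  have fst_N: "fst \<in> measurable N (restrict_space borel (lower_hemi R))"
    unfolding N_def
  proof (rule measurable_restrict_space2)
    show "fst \<in> space (restrict_space borel (lower_hemi R \<times> upper_hemi R)) \<rightarrow> lower_hemi R"
      by (auto simp: space_restrict_space)
    show "fst \<in> measurable (restrict_space borel (lower_hemi R \<times> upper_hemi R)) (borel :: 'm pt measure)"
      by (rule measurable_restrict_space1) (rule fst_borel)
  qed
  have snd_N: "snd \<in> measurable N (restrict_space borel (upper_hemi R))"
    unfolding N_def
  proof (rule measurable_restrict_space2)
    show "snd \<in> space (restrict_space borel (lower_hemi R \<times> upper_hemi R)) \<rightarrow> upper_hemi R"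
      by (auto simp: space_restrict_space)
    show "snd \<in> measurable (restrict_space borel (lower_hemi R \<times> upper_hemi R)) (borel :: 'm pt measure)"
      by (rule measurable_restrict_space1) (rule snd_borel)
  qed
  have adm: "admissible_plan R \<nu>"
    unfolding admissible_plan_def
  proof (intro conjI)
    show "sets \<nu> = sets (restrict_space borel (lower_hemi R \<times> upper_hemi R))"
      by (simp add: \<nu>_def N_def)
    show "space \<nu> = lower_hemi R \<times> upper_hemi R"
      by (simp add: \<nu>_def N_def space_scale_measure space_restrict_space)
    show "distr \<nu> (restrict_space borel (lower_hemi R)) fst = mu_minus R"
      unfolding \<nu>_def distr_scale[OF fst_N[folded measurable_distr_eq1[of M N G]]]
      by (subst distr_distr[OF fst_N G_meas]) (simp add: comp_def G_def mu_minus_def M_def s_def)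
    show "distr \<nu> (restrict_space borel (upper_hemi R)) snd = mu_plus R"
      unfolding \<nu>_def distr_scale[OF snd_N[folded measurable_distr_eq1[of M N G]]]
      by (subst distr_distr[OF snd_N G_meas]) (simp add: comp_def G_def mu_plus_def M_def s_def)
  qed
  have AE: "AE p in \<nu>. fst (fst p) = fst (snd p)"
    unfolding \<nu>_def
  proof (rule AE_scale)
    have cl: "closed {p :: 'm pt \<times> 'm pt. fst (fst p) = fst (snd p)}"
      by (rule closed_Collect_eq) (intro continuous_intros)+
    have "{p \<in> space N. fst (fst p) = fst (snd p)} = (lower_hemi R \<times> upper_hemi R) \<inter> {p. fst (fst p) = fst (snd p)}"
      by (auto simp: N_def space_restrict_space)
    also have "\<dots> \<in> sets N"
      unfolding N_def sets_restrict_space using borel_closed[OF cl] by blast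
    finally have "{p \<in> space N. fst (fst p) = fst (snd p)} \<in> sets N" .
    then show "AE p in distr M N G. fst (fst p) = fst (snd p)"
      by (subst AE_distr_iff[OF G_meas]) (auto simp: G_def)
  qed
  have fm: "(\<lambda>p. ennreal (norm (fst p - snd p))) \<in> borel_measurable N"
    unfolding N_def
    by (rule measurable_restrict_space1) measurable
  have "(\<integral>\<^sup>+ p. ennreal (norm (fst p - snd p)) \<partial>\<nu>) = ennreal s * (\<integral>\<^sup>+ x. ennreal (norm (fst (G x) - snd (G x))) \<partial>M)"
    unfolding \<nu>_def
    by (simp add: nn_integral_scale_measure fm nn_integral_distr[OF G_meas])
  also have "(\<integral>\<^sup>+ x. ennreal (norm (fst (G x) - snd (G x))) \<partial>M)
     = (\<integral>\<^sup>+x. indicator (cball (0::real^'m) R) x * ennreal (2 * sqrt (R\<^sup>2 - (norm x)\<^sup>2)) \<partial>lborel)"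
    unfolding M_def
  proof (subst nn_integral_restrict_space, simp, rule nn_integral_cong)
    fix x :: "real^'m"
    show "ennreal (norm (fst (G x) - snd (G x))) * indicator (cball 0 R) x =
          indicator (cball 0 R) x * ennreal (2 * sqrt (R\<^sup>2 - (norm x)\<^sup>2))"
    proof (cases "norm x \<le> R")
      case True
      then have "(norm x)\<^sup>2 \<le> R\<^sup>2" by (simp add: power_mono)
      have e: "sqrt (4 * R\<^sup>2 - 4 * (norm x)\<^sup>2) = 2 * sqrt (R\<^sup>2 - (norm x)\<^sup>2)"
      proof -
        have a: "4 * R\<^sup>2 - 4 * (norm x)\<^sup>2 = 4 * (R\<^sup>2 - (norm x)\<^sup>2)" by simp
        show ?thesis unfolding a real_sqrt_mult real_sqrt_four by (rule refl)
      qed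
      have "norm (fst (G x) - snd (G x)) = 2 * sqrt (R\<^sup>2 - (norm x)\<^sup>2)"
        using \<open>(norm x)\<^sup>2 \<le> R\<^sup>2\<close> by (simp add: G_def norm_Pair e)
      then show ?thesis by (simp add: mult.commute)
    next
      case False then show ?thesis by (simp add: dist_norm)
    qed
  qed
  also have "\<dots> = ennreal (ball_vol (CARD('m)+1) * R^(CARD('m)+1))"
    using assms by (intro key) simp
  finally have "(\<integral>\<^sup>+ p. ennreal (norm (fst p - snd p)) \<partial>\<nu>) = ennreal (s * ball_vol (CARD('m) + 1) * R ^ (CARD('m) + 1))"
    using s0 by (simp add: ennreal_mult' mult.assoc)
  then show ?thesis using part1 adm AE unfolding s_def by blast
qed

end
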